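(* Let $\varepsilon>0$, let $u,v\in C(\bar\Omega)$ and $f,\tilde f:\Omega_\varepsilon\to\mathbb{R}$ satisfy, at every point of $\Omega_\varepsilon$, $$a^-_\varepsilon(\beta)S^-_\varepsilon u-a^+_\varepsilon(\beta)S^+_\varepsilon u\le f\le\tilde f\le a^-_\varepsilon(\beta)S^-_\varepsilon v-a^+_\varepsilon(\beta)S^+_\varepsilon v.$$ Suppose in addition that (i) $f<\tilde f$ on $\Omega_\varepsilon$, or (ii) $f\le0$ on $\Omega_\varepsilon$, or (iii) $\tilde f\ge0$ on $\Omega_\varepsilon$. Then $$\max_{\bar\Omega}(u-v)=\max_{\bar\Omega\setminus\Omega_\varepsilon}(u-v).$$
   Context: Setting: $\Omega\subseteq\mathbb{R}^n$ is a bounded open connected set with $C^1$ boundary, $\Gamma_D\subseteq\partial\Omega$ is a nonempty closed subset (the Dirichlet part of the boundary), $\beta\in\mathbb{R}$. Notation: $\Omega_\varepsilon:=\{x\in\bar\Omega:\operatorname{dist}(x,\Gamma_D)>\varepsilon\}$; for a function $w$ and $x\in\Omega_\varepsilon$, $w^\varepsilon(x):=\max_{\bar B(x,\varepsilon)\cap\bar\Omega}w$, $w_\varepsilon(x):=\min_{\bar B(x,\varepsilon)\cap\bar\Omega}w$, $S^+_\varepsilon w(x):=\frac1\varepsilon(w^\varepsilon(x)-w(x))$, $S^-_\varepsilon w(x):=\frac1\varepsilon(w(x)-w_\varepsilon(x))$. Coefficients: for $\beta\ne0$, $a^+_\varepsilon(\beta):=\frac{\beta}{e^{\varepsilon\beta}-1}$,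 $a^-_\varepsilon(\beta):=\frac{\beta}{1-e^{-\varepsilon\beta}}$; $a^\pm_\varepsilon(0):=1/\varepsilon$. *)

theory Defs
  imports "HOL-Analysis.Analysis"
begin

definition C1_boundary :: "'a::euclidean_space set \<Rightarrow> bool" where
  "C1_boundary \<Omega> \<longleftrightarrow>
     (\<forall>p\<in>frontier \<Omega>. \<exists>U \<phi> g. open U \<and> p \<in> U \<and>
        (\<forall>x\<in>U. (\<phi> has_derivative (\<lambda>h. g x \<bullet> h)) (at x)) \<and>
        continuous_on U g \<and> (\<forall>x\<in>U. g x \<noteq> 0) \<and>
        \<Omega> \<inter> U = {x\<in>U. \<phi> x < (0::real)})"

definition Omega_eps :: "'a::euclidean_space set \<Rightarrow> 'a set \<Rightarrow> real \<Rightarrow> 'a set" where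
  "Omega_eps \<Omega> \<Gamma>D \<epsilon> = {x \<in> closure \<Omega>. infdist x \<Gamma>D > \<epsilon>}"

definition upper_env :: "'a::euclidean_space set \<Rightarrow> real \<Rightarrow> ('a \<Rightarrow> real) \<Rightarrow> 'a \<Rightarrow> real" where
  "upper_env \<Omega> \<epsilon> w x = (SUP y\<in>cball x \<epsilon> \<inter> closure \<Omega>. w y)"

definition lower_env :: "'a::euclidean_space set \<Rightarrow> real \<Rightarrow> ('a \<Rightarrow> real) \<Rightarrow> 'a \<Rightarrow> real" where
  "lower_env \<Omega> \<epsilon> w x = (INF y\<in>cball x \<epsilon> \<inter> closure \<Omega>. w y)"

definition S_plus :: "'a::euclidean_space set \<Rightarrow> real \<Rightarrow> ('a \<Rightarrow> real) \<Rightarrow> 'a \<Rightarrow> real" where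
  "S_plus \<Omega> \<epsilon> w x = (upper_env \<Omega> \<epsilon> w x - w x) / \<epsilon>"

definition S_minus :: "'a::euclidean_space set \<Rightarrow> real \<Rightarrow> ('a \<Rightarrow> real) \<Rightarrow> 'a \<Rightarrow> real" where
  "S_minus \<Omega> \<epsilon> w x = (w x - lower_env \<Omega> \<epsilon> w x) / \<epsilon>"

definition a_plus :: "real \<Rightarrow> real \<Rightarrow> real" where
  "a_plus \<epsilon> \<beta> = (if \<beta> = 0 then 1 / \<epsilon> else \<beta> / (exp (\<epsilon> * \<beta>) - 1))"

definition a_minus :: "real \<Rightarrow> real \<Rightarrow> real" where
  "a_minus \<epsilon> \<beta> = (if \<beta> = 0 then 1 / \<epsilon> else \<beta> / (1 - exp (- (\<epsilon> * \<beta>))))"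

end

theory Submission
  imports Defs
begin

lemma upper_att:
  fixes \<Omega> :: "'a::euclidean_space set"
  assumes "compact (closure \<Omega>)" "continuous_on (closure \<Omega>) g" "x \<in> closure \<Omega>" "e \<ge> 0"
  shows "\<exists>z\<in>cball x e \<inter> closure \<Omega>. upper_env \<Omega> e g x = g z \<and> (\<forall>y\<in>cball x e \<inter> closure \<Omega>. g y \<le> g z)"
proof -
  have c: "compact (cball x e \<inter> closure \<Omega>)" by (simp add: compact_Int_closed)
  have "x \<in> cball x e \<inter> closure \<Omega>" using assms by simp
  then have ne: "cball x e \<inter> closure \<Omega> \<noteq> {}" by blast
  obtain z where z: "z \<in> cball x e \<inter> closure \<Omega>" "\<forall>y\<in>cball x e \<inter> closure \<Omega>. g y \<le> g z"
    using continuous_attains_sup[OF c ne continuous_on_subset[OF assms(2)]] by blast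
  have "upper_env \<Omega> e g x = g z" unfolding upper_env_def
    by (rule cSup_eq_maximum) (use z in auto)
  with z show ?thesis by blast
qed

lemma lower_att:
  fixes \<Omega> :: "'a::euclidean_space set"
  assumes "compact (closure \<Omega>)" "continuous_on (closure \<Omega>) g" "x \<in> closure \<Omega>" "e \<ge> 0"
  shows "\<exists>z\<in>cball x e \<inter> closure \<Omega>. lower_env \<Omega> e g x = g z \<and> (\<forall>y\<in>cball x e \<inter> closure \<Omega>. g z \<le> g y)"
proof -
  have c: "compact (cball x e \<inter> closure \<Omega>)" by (simp add: compact_Int_closed)
  have "x \<in> cball x e \<inter> closure \<Omega>" using assms by simp
  then have ne: "cball x e \<inter> closure \<Omega> \<noteq> {}" by blast
  obtain z where z: "z \<in> cball x e \<inter> closure \<Omega>" "\<forall>y\<in>cball x e \<inter> closure \<Omega>. g z \<le> g y"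
    using continuous_attains_inf[OF c ne continuous_on_subset[OF assms(2)]] by blast
  have "lower_env \<Omega> e g x = g z" unfolding lower_env_def
    by (rule cInf_eq_minimum) (use z in auto)
  with z show ?thesis by blast
qed

lemma a_plus_pos: "e > 0 \<Longrightarrow> a_plus e b > 0"
proof -
  assume e: "e > 0"
  show ?thesis
  proof (cases "b = 0")
    case True then show ?thesis using e by (simp add: a_plus_def)
  next
    case False
    show ?thesis
    proof (cases "b > 0")
      case True
      then have "exp (e*b) > 1" using e by simp
      then show ?thesis using True by (simp add: a_plus_def)
    next
      case False2: False
      then have b: "b < 0" using False by simp
      then have "e*b < 0" using e by (simp add: mult_pos_neg)
      then have "exp (e*b) < 1" by simp
      then show ?thesis using b False by (simp add: a_plus_def divide_neg_neg)
    qed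
  qed
qed

lemma a_minus_pos: "e > 0 \<Longrightarrow> a_minus e b > 0"
proof -
  assume e: "e > 0"
  show ?thesis
  proof (cases "b = 0")
    case True then show ?thesis using e by (simp add: a_minus_def)
  next
    case False
    show ?thesis
    proof (cases "b > 0")
      case True
      then have "exp (-(e*b)) < 1" using e by simp
      then show ?thesis using True by (simp add: a_minus_def)
    next
      case False2: False
      then have b: "b < 0" using False by simp
      then have "e*b < 0" using e by (simp add: mult_pos_neg)
      then have "exp (-(e*b)) > 1" by simp
      then show ?thesis using b False by (simp add: a_minus_def divide_neg_neg)
    qed
  qed
qed

lemma key_ineq:
  fixes A B Qu Qv Pu Pv e :: real
  assumes "A > 0" "B > 0" "e > 0" "Pu \<le> Pv" "Qv \<le> Qu"
    "A * (Qu / e) - B * (Pu / e) \<le> A * (Qv / e) - B * (Pv / e)"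
  shows "Pu = Pv" "Qu = Qv"
proof -
  have "A * Qu - B * Pu \<le> A * Qv - B * Pv"
  proof -
    have "(A * Qu - B * Pu) / e \<le> (A * Qv - B * Pv) / e" using assms(6) by (simp add: diff_divide_distrib)
    then show ?thesis using assms(3) by (simp add: divide_right_mono_neg divide_le_cancel)
  qed
  then have "A * (Qu - Qv) + B * (Pv - Pu) \<le> 0" by (simp add: algebra_simps)
  moreover have "A * (Qu - Qv) \<ge> 0" "B * (Pv - Pu) \<ge> 0" using assms by auto
  ultimately have "A * (Qu - Qv) = 0" "B * (Pv - Pu) = 0" by linarith+
  then show "Pu = Pv" "Qu = Qv" using assms by auto
qed

lemma clopen_all:
  fixes K E :: "'a::euclidean_space set"
  assumes "connected K" "E \<subseteq> K" "closed E" "E \<noteq> {}" "e > 0"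
    "\<And>x y. x \<in> E \<Longrightarrow> y \<in> cball x e \<inter> K \<Longrightarrow> y \<in> E"
  shows "E = K"
proof -
  have "\<forall>x\<in>E. \<exists>d>0. \<forall>x'\<in>K. dist x' x < d \<longrightarrow> x' \<in> E"
  proof
    fix x assume x: "x \<in> E"
    show "\<exists>d>0. \<forall>x'\<in>K. dist x' x < d \<longrightarrow> x' \<in> E"
      using assms(5) assms(6)[OF x] by (auto simp: dist_commute intro!: exI[of _ e])
  qed
  then have "openin (top_of_set K) E"
    unfolding openin_euclidean_subtopology_iff using assms(2) by blast
  moreover have "closedin (top_of_set K) E" using closed_subset assms by blast
  ultimately show ?thesis using assms(1,4) unfolding connected_clopen by blast
qed

theorem lemma4p2:
  fixes \<Omega> \<Gamma>D :: "'a::euclidean_space set"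
    and \<beta> \<epsilon> :: real and u v f f' :: "'a \<Rightarrow> real"
  assumes "bounded \<Omega>" "open \<Omega>" "connected \<Omega>" "C1_boundary \<Omega>"
    and "\<Gamma>D \<subseteq> frontier \<Omega>" "closed \<Gamma>D" "\<Gamma>D \<noteq> {}"
    and "\<epsilon> > 0"
    and "continuous_on (closure \<Omega>) u" "continuous_on (closure \<Omega>) v"
    and sub: "\<And>x. x \<in> Omega_eps \<Omega> \<Gamma>D \<epsilon> \<Longrightarrow>
         a_minus \<epsilon> \<beta> * S_minus \<Omega> \<epsilon> u x - a_plus \<epsilon> \<beta> * S_plus \<Omega> \<epsilon> u x \<le> f x"
    and ff: "\<And>x. x \<in> Omega_eps \<Omega> \<Gamma>D \<epsilon> \<Longrightarrow> f x \<le> f' x"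
    and super: "\<And>x. x \<in> Omega_eps \<Omega> \<Gamma>D \<epsilon> \<Longrightarrow>
         f' x \<le> a_minus \<epsilon> \<beta> * S_minus \<Omega> \<epsilon> v x - a_plus \<epsilon> \<beta> * S_plus \<Omega> \<epsilon> v x"
    and cases: "(\<forall>x\<in>Omega_eps \<Omega> \<Gamma>D \<epsilon>. f x < f' x) \<or>
                (\<forall>x\<in>Omega_eps \<Omega> \<Gamma>D \<epsilon>. f x \<le> 0) \<or>
                (\<forall>x\<in>Omega_eps \<Omega> \<Gamma>D \<epsilon>. f' x \<ge> 0)"
  shows "(SUP x\<in>closure \<Omega>. u x - v x) = (SUP x\<in>closure \<Omega> - Omega_eps \<Omega> \<Gamma>D \<epsilon>. u x - v x)"
proof -
  let ?K = "closure \<Omega>"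
  let ?Oe = "Omega_eps \<Omega> \<Gamma>D \<epsilon>"
  let ?w = "\<lambda>x. u x - v x"
  have cK: "compact ?K" using assms(1) by (simp add: compact_closure)
  have cw: "continuous_on ?K ?w" using assms(9,10) by (intro continuous_intros)
  obtain g where g: "g \<in> \<Gamma>D" using assms(7) by blast
  have gK: "g \<in> ?K" using g assms(5) frontier_def by auto
  have gB: "g \<notin> ?Oe" using g assms(8) by (simp add: Omega_eps_def infdist_zero)
  have Kne: "?K \<noteq> {}" using gK by auto
  obtain x0 where x0: "x0 \<in> ?K" "\<forall>y\<in>?K. ?w y \<le> ?w x0"
    using continuous_attains_sup[OF cK Kne cw] by blast
  define M where "M = ?w x0"
  define E where "E = {y \<in> ?K. ?w y = M}"
  have Ecl: "closed E" unfolding E_def by (rule continuous_closed_preimage_constant[OF cw]) simp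
  have EK: "E \<subseteq> ?K" unfolding E_def by auto
  have x0E: "x0 \<in> E" using x0 by (simp add: E_def M_def)
  have wM: "\<And>y. y \<in> ?K \<Longrightarrow> ?w y \<le> M" using x0 M_def by auto
  have conK: "connected ?K" using assms(3) by (rule connected_imp_connected_closure)
  have ap: "a_plus \<epsilon> \<beta> > 0" and am: "a_minus \<epsilon> \<beta> > 0" using assms(8) a_plus_pos a_minus_pos by auto
  have e0: "\<epsilon> \<ge> 0" using assms(8) by simp
  have ex: "\<exists>b\<in>?K - ?Oe. ?w b = M"
  proof (rule ccontr)
    assume nb: "\<not> ?thesis"
    have EO: "E \<subseteq> ?Oe" using nb E_def by auto
    have eqs: "upper_env \<Omega> \<epsilon> u x - u x = upper_env \<Omega> \<epsilon> v x - v x \<and>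
               u x - lower_env \<Omega> \<epsilon> u x = v x - lower_env \<Omega> \<epsilon> v x \<and> f x = f' x"
      if xE: "x \<in> E" for x
    proof -
      have xK: "x \<in> ?K" and wx: "?w x = M" using xE E_def by auto
      have xO: "x \<in> ?Oe" using xE EO by auto
      obtain z where z: "z \<in> cball x \<epsilon> \<inter> ?K" "upper_env \<Omega> \<epsilon> u x = u z"
        using upper_att[OF cK assms(9) xK e0] by blast
      obtain z2 where z2: "upper_env \<Omega> \<epsilon> v x = v z2" "\<forall>y\<in>cball x \<epsilon> \<inter> ?K. v y \<le> v z2"
        using upper_att[OF cK assms(10) xK e0] by blast
      obtain z3 where z3: "z3 \<in> cball x \<epsilon> \<inter> ?K" "lower_env \<Omega> \<epsilon> v x = v z3"
        using lower_att[OF cK assms(10) xK e0] by blast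
      obtain z4 where z4: "lower_env \<Omega> \<epsilon> u x = u z4" "\<forall>y\<in>cball x \<epsilon> \<inter> ?K. u z4 \<le> u y"
        using lower_att[OF cK assms(9) xK e0] by blast
      have P: "upper_env \<Omega> \<epsilon> u x - u x \<le> upper_env \<Omega> \<epsilon> v x - v x"
        using z z2 wM[of z] wx by force
      have Q: "v x - lower_env \<Omega> \<epsilon> v x \<le> u x - lower_env \<Omega> \<epsilon> u x"
        using z3 z4 wM[of z3] wx by force
      have L: "a_minus \<epsilon> \<beta> * S_minus \<Omega> \<epsilon> u x - a_plus \<epsilon> \<beta> * S_plus \<Omega> \<epsilon> u x
             \<le> a_minus \<epsilon> \<beta> * S_minus \<Omega> \<epsilon> v x - a_plus \<epsilon> \<beta> * S_plus \<Omega> \<epsilon> v x"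
        using sub[OF xO] ff[OF xO] super[OF xO] by linarith
      have r: "upper_env \<Omega> \<epsilon> u x - u x = upper_env \<Omega> \<epsilon> v x - v x"
              "u x - lower_env \<Omega> \<epsilon> u x = v x - lower_env \<Omega> \<epsilon> v x"
        using key_ineq[OF am ap assms(8) P Q] L unfolding S_plus_def S_minus_def by auto
      then have "a_minus \<epsilon> \<beta> * S_minus \<Omega> \<epsilon> u x - a_plus \<epsilon> \<beta> * S_plus \<Omega> \<epsilon> u x
             = a_minus \<epsilon> \<beta> * S_minus \<Omega> \<epsilon> v x - a_plus \<epsilon> \<beta> * S_plus \<Omega> \<epsilon> v x"
        unfolding S_plus_def S_minus_def by simp
      then have "f x = f' x" using sub[OF xO] ff[OF xO] super[OF xO] by linarith
      with r show ?thesis by blast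
    qed
    have flat: "y \<in> E"
      if xE: "x \<in> E" and y: "y \<in> cball x \<epsilon> \<inter> ?K"
        and fu: "upper_env \<Omega> \<epsilon> u x = u x" "lower_env \<Omega> \<epsilon> u x = u x"
        and fv: "upper_env \<Omega> \<epsilon> v x = v x" "lower_env \<Omega> \<epsilon> v x = v x" for x y
    proof -
      have xK: "x \<in> ?K" and wx: "?w x = M" using xE E_def by auto
      obtain z where z: "upper_env \<Omega> \<epsilon> u x = u z" "\<forall>y\<in>cball x \<epsilon> \<inter> ?K. u y \<le> u z"
        using upper_att[OF cK assms(9) xK e0] by blast
      obtain z2 where z2: "upper_env \<Omega> \<epsilon> v x = v z2" "\<forall>y\<in>cball x \<epsilon> \<inter> ?K. v y \<le> v z2"
        using upper_att[OF cK assms(10) xK e0] by blast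
      obtain z3 where z3: "lower_env \<Omega> \<epsilon> v x = v z3" "\<forall>y\<in>cball x \<epsilon> \<inter> ?K. v z3 \<le> v y"
        using lower_att[OF cK assms(10) xK e0] by blast
      obtain z4 where z4: "lower_env \<Omega> \<epsilon> u x = u z4" "\<forall>y\<in>cball x \<epsilon> \<inter> ?K. u z4 \<le> u y"
        using lower_att[OF cK assms(9) xK e0] by blast
      have "u y = u x" "v y = v x" using y z z2 z3 z4 fu fv by (metis order_antisym)+
      then show ?thesis using y wx E_def by auto
    qed
    from cases show False
    proof (elim disjE)
      assume "\<forall>x\<in>?Oe. f x < f' x"
      then show False using eqs[OF x0E] x0E EO by fastforce
    next
      assume f0: "\<forall>x\<in>?Oe. f x \<le> 0"
      have cE: "compact E" using Ecl cK EK by (metis compact_Int_closed inf.absorb_iff2)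
      obtain x1 where x1: "x1 \<in> E" "\<forall>y\<in>E. u y \<le> u x1"
        using continuous_attains_sup[OF cE _ continuous_on_subset[OF assms(9) EK]] x0E by blast
      define E' where "E' = {y \<in> ?K. ?w y = M \<and> u y = u x1}"
      have E'E: "E' \<subseteq> E" by (auto simp: E'_def E_def)
      have "E' = ?K"
      proof (rule clopen_all[OF conK _ _ _ assms(8)])
        show "E' \<subseteq> ?K" by (auto simp: E'_def)
        have "E' = {y \<in> ?K. ?w y = M} \<inter> {y \<in> ?K. u y = u x1}" by (auto simp: E'_def)
        then show "closed E'"
          using continuous_closed_preimage_constant[OF cw closed_closure]
                continuous_closed_preimage_constant[OF assms(9) closed_closure] by auto
        show "E' \<noteq> {}" using x1 by (auto simp: E'_def E_def)
      next
        fix x y assume xE': "x \<in> E'" and y: "y \<in> cball x \<epsilon> \<inter> ?K"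
        have xE: "x \<in> E" using xE' E'E by auto
        have xK: "x \<in> ?K" and wx: "?w x = M" and ux: "u x = u x1" using xE' E'_def by auto
        have xO: "x \<in> ?Oe" using xE EO by auto
        obtain z where z: "z \<in> cball x \<epsilon> \<inter> ?K" "upper_env \<Omega> \<epsilon> u x = u z" "\<forall>y\<in>cball x \<epsilon> \<inter> ?K. u y \<le> u z"
          using upper_att[OF cK assms(9) xK e0] by blast
        obtain z2 where z2: "upper_env \<Omega> \<epsilon> v x = v z2" "\<forall>y\<in>cball x \<epsilon> \<inter> ?K. v y \<le> v z2"
          using upper_att[OF cK assms(10) xK e0] by blast
        obtain z4 where z4: "lower_env \<Omega> \<epsilon> u x = u z4" "\<forall>y\<in>cball x \<epsilon> \<inter> ?K. u z4 \<le> u y"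
          using lower_att[OF cK assms(9) xK e0] by blast
        have e1: "upper_env \<Omega> \<epsilon> u x - u x = upper_env \<Omega> \<epsilon> v x - v x"
          and e2: "u x - lower_env \<Omega> \<epsilon> u x = v x - lower_env \<Omega> \<epsilon> v x" using eqs[OF xE] by auto
        have "?w z \<ge> M" using e1 z z2 wx by force
        then have "z \<in> E" using wM[of z] z E_def by force
        then have "u z \<le> u x" using x1 ux by auto
        moreover have "u x \<le> u z" using z xK e0 by auto
        ultimately have Pu: "upper_env \<Omega> \<epsilon> u x = u x" using z by simp
        have "u z4 \<le> u x" using z4 xK e0 by auto
        then have Qnn: "u x - lower_env \<Omega> \<epsilon> u x \<ge> 0" using z4 by simp
        have "a_minus \<epsilon> \<beta> * S_minus \<Omega> \<epsilon> u x \<le> 0"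
          using sub[OF xO] f0 xO Pu unfolding S_plus_def by fastforce
        then have "S_minus \<Omega> \<epsilon> u x \<le> 0" using am by (simp add: mult_le_0_iff)
        then have "u x - lower_env \<Omega> \<epsilon> u x \<le> 0" using assms(8) unfolding S_minus_def
          by (simp add: divide_le_0_iff)
        then have Qu: "lower_env \<Omega> \<epsilon> u x = u x" using Qnn by simp
        have "y \<in> E" using flat[OF xE y Pu Qu] e1 e2 Pu Qu by simp
        moreover have "u y = u x"
        proof -
          have "u y \<le> u z" "u z4 \<le> u y" using z z4 y by auto
          then show ?thesis using z z4 Pu Qu by simp
        qed
        ultimately show "y \<in> E'" using ux by (auto simp: E'_def E_def)
      qed
      then show False using gK gB E'E EO by blast
    next
      assume f0: "\<forall>x\<in>?Oe. f' x \<ge> 0"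
      have cE: "compact E" using Ecl cK EK by (metis compact_Int_closed inf.absorb_iff2)
      obtain x1 where x1: "x1 \<in> E" "\<forall>y\<in>E. v x1 \<le> v y"
        using continuous_attains_inf[OF cE _ continuous_on_subset[OF assms(10) EK]] x0E by blast
      define E' where "E' = {y \<in> ?K. ?w y = M \<and> v y = v x1}"
      have E'E: "E' \<subseteq> E" by (auto simp: E'_def E_def)
      have "E' = ?K"
      proof (rule clopen_all[OF conK _ _ _ assms(8)])
        show "E' \<subseteq> ?K" by (auto simp: E'_def)
        have "E' = {y \<in> ?K. ?w y = M} \<inter> {y \<in> ?K. v y = v x1}" by (auto simp: E'_def)
        then show "closed E'"
          using continuous_closed_preimage_constant[OF cw closed_closure]
                continuous_closed_preimage_constant[OF assms(10) closed_closure] by auto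
        show "E' \<noteq> {}" using x1 by (auto simp: E'_def E_def)
      next
        fix x y assume xE': "x \<in> E'" and y: "y \<in> cball x \<epsilon> \<inter> ?K"
        have xE: "x \<in> E" using xE' E'E by auto
        have xK: "x \<in> ?K" and wx: "?w x = M" and vx: "v x = v x1" using xE' E'_def by auto
        have xO: "x \<in> ?Oe" using xE EO by auto
        obtain z where z: "z \<in> cball x \<epsilon> \<inter> ?K" "lower_env \<Omega> \<epsilon> v x = v z" "\<forall>y\<in>cball x \<epsilon> \<inter> ?K. v z \<le> v y"
          using lower_att[OF cK assms(10) xK e0] by blast
        obtain z2 where z2: "lower_env \<Omega> \<epsilon> u x = u z2" "\<forall>y\<in>cball x \<epsilon> \<inter> ?K. u z2 \<le> u y"
          using lower_att[OF cK assms(9) xK e0] by blast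
        obtain z4 where z4: "upper_env \<Omega> \<epsilon> v x = v z4" "\<forall>y\<in>cball x \<epsilon> \<inter> ?K. v y \<le> v z4"
          using upper_att[OF cK assms(10) xK e0] by blast
        have e1: "upper_env \<Omega> \<epsilon> u x - u x = upper_env \<Omega> \<epsilon> v x - v x"
          and e2: "u x - lower_env \<Omega> \<epsilon> u x = v x - lower_env \<Omega> \<epsilon> v x" using eqs[OF xE] by auto
        have "?w z \<ge> M" using e2 z z2 wx by force
        then have "z \<in> E" using wM[of z] z E_def by force
        then have "v x \<le> v z" using x1 vx by auto
        moreover have "v z \<le> v x" using z xK e0 by auto
        ultimately have Qv: "lower_env \<Omega> \<epsilon> v x = v x" using z by simp
        have "v x \<le> v z4" using z4 xK e0 by auto
        then have Pnn: "upper_env \<Omega> \<epsilon> v x - v x \<ge> 0" using z4 by simp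
        have "a_plus \<epsilon> \<beta> * S_plus \<Omega> \<epsilon> v x \<le> 0"
          using super[OF xO] f0 xO Qv unfolding S_minus_def by fastforce
        then have "S_plus \<Omega> \<epsilon> v x \<le> 0" using ap by (simp add: mult_le_0_iff)
        then have "upper_env \<Omega> \<epsilon> v x - v x \<le> 0" using assms(8) unfolding S_plus_def
          by (simp add: divide_le_0_iff)
        then have Pv: "upper_env \<Omega> \<epsilon> v x = v x" using Pnn by simp
        have Pu: "upper_env \<Omega> \<epsilon> u x = u x" and Qu: "lower_env \<Omega> \<epsilon> u x = u x"
          using e1 e2 Pv Qv by simp_all
        have "y \<in> E" using flat[OF xE y Pu Qu Pv Qv] .
        moreover have "v y = v x"
        proof -
          have "v y \<le> v z4" "v z \<le> v y" using z z4 y by auto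
          then show ?thesis using z z4 Pv Qv by simp
        qed
        ultimately show "y \<in> E'" using vx by (auto simp: E'_def E_def)
      qed
      then show False using gK gB E'E EO by blast
    qed
  qed
  then obtain b where b: "b \<in> ?K - ?Oe" "?w b = M" by blast
  have "(SUP x\<in>?K. ?w x) = M"
    by (rule cSup_eq_maximum) (use x0E E_def wM in auto)
  moreover have "(SUP x\<in>?K - ?Oe. ?w x) = M"
    by (rule cSup_eq_maximum) (use b wM in auto)
  ultimately show ?thesis by simp
qed

end
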